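(* Let $X$ be a real Banach space and $A:X\rightrightarrows X^*$ maximal monotone with $\mathcal{F}_A=\{F_A\}$. Then for every $w\in\mathrm{dom}(A)$, $v^*\in\mathrm{Im}(A)$, $x\in X$ and $x^*\in X^*$: (i) $F_A(x,v^* )=g_{A,v^*}^*(x)=P_A(x,v^* )$; (ii) $F_A(w,x^* )=f_{A,w}^*(x^* )=P_A(w,x^* )$.
   Context: A representative function of $A$ is a proper convex lsc $h$ on $X\times X^*$ with $h(x,x^* )\ge\langle x,x^*\rangle$ everywhere and equality on $\mathrm{Gr}(A)$; $\mathcal{F}_A$ is the set of all of them. $F_A(x,x^* )=\sup_{(y,y^* )\in\mathrm{Gr}(A)}\{\langle y,x^*\rangle+\langle x,y^*\rangle-\langle y,y^*\rangle\}$. With $\phi(x,x^* )=\langle x,x^*\rangle$ on $\mathrm{Gr}(A)$ and $+\infty$ elsewhere, $P_A$ is the restriction to $X\times X^*$ of $\phi^{**}$. $f_{A,w}(x)=\inf_{a^*\in X^*}\{P_A(x,a^* )-\langle w,a^*\rangle\}$, $g_{A,v^*}(x^* )=\inf_{a\in X}\{P_A(a,x^* )-\langle a,v^*\rangle\}$, with conjugates $f_{A,w}^*(x^* )=\sup_{y\in X}\{\langle y,x^*\rangle-f_{A,w}(y)\}$ and $g_{A,v^*}^*(x)=\sup_{y^*\in X^*}\{\langle x,y^*\rangle-g_{A,v^*}(y^* )\}$. *)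

theory Defs
  imports "HOL-Analysis.Analysis" "HOL-Library.Extended_Real"
begin


(* X is a real Banach space, the type 'a::banach; the dual space is the type of
   bounded linear functionals 'a =>L real; the bidual is (('a =>L real) =>L real).
   A multivalued operator A is given by its graph, a set of pairs (point, functional). Convexity and lower
   semicontinuity are expressed via the epigraph, in the norm topology. *)

type_synonym 'a dual = "'a \<Rightarrow>\<^sub>L real"

definition pair :: "'a::real_normed_vector \<Rightarrow> 'a dual \<Rightarrow> real" where
  "pair x xs = blinfun_apply xs x"

definition dom_op :: "('a \<times> 'b) set \<Rightarrow> 'a set" where
  "dom_op A = fst ` A"

definition im_op :: "('a \<times> 'b) set \<Rightarrow> 'b set" where
  "im_op A = snd ` A"

definition monotone_op :: "('a::real_normed_vector \<times> 'a dual) set \<Rightarrow> bool" where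
  "monotone_op A \<longleftrightarrow> (\<forall>(x, xs)\<in>A. \<forall>(y, ys)\<in>A. pair (x - y) (xs - ys) \<ge> 0)"

definition maximal_monotone :: "('a::real_normed_vector \<times> 'a dual) set \<Rightarrow> bool" where
  "maximal_monotone A \<longleftrightarrow> monotone_op A \<and>
     (\<forall>B. monotone_op B \<and> A \<subseteq> B \<longrightarrow> B = A)"


definition proper_fun :: "('b \<Rightarrow> ereal) \<Rightarrow> bool" where
  "proper_fun h \<longleftrightarrow> (\<forall>p. h p \<noteq> -\<infinity>) \<and> (\<exists>p. h p \<noteq> \<infinity>)"

definition convex_fun :: "('b::real_vector \<Rightarrow> ereal) \<Rightarrow> bool" where
  "convex_fun h \<longleftrightarrow> convex {(p, r::real). h p \<le> ereal r}"

definition lsc_fun :: "('b::topological_space \<Rightarrow> ereal) \<Rightarrow> bool" where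
  "lsc_fun h \<longleftrightarrow> closed {(p, r::real). h p \<le> ereal r}"

definition representative_funs ::
  "('a::real_normed_vector \<times> 'a dual) set \<Rightarrow> ('a \<times> 'a dual \<Rightarrow> ereal) set" where
  "representative_funs A = {h. proper_fun h \<and> convex_fun h \<and> lsc_fun h \<and>
      (\<forall>x xs. h (x, xs) \<ge> ereal (pair x xs)) \<and>
      (\<forall>(x, xs)\<in>A. h (x, xs) = ereal (pair x xs))}"


definition fitzpatrick :: "('a::real_normed_vector \<times> 'a dual) set \<Rightarrow> 'a \<times> 'a dual \<Rightarrow> ereal" where
  "fitzpatrick A = (\<lambda>(x, xs). SUP (y, ys)\<in>A. ereal (pair y xs + pair x ys - pair y ys))"


definition phi_fun :: "('a::real_normed_vector \<times> 'a dual) set \<Rightarrow> 'a \<times> 'a dual \<Rightarrow> ereal" where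
  "phi_fun A = (\<lambda>(x, xs). if (x, xs) \<in> A then ereal (pair x xs) else \<infinity>)"

definition phi_conj :: "('a::real_normed_vector \<times> 'a dual) set \<Rightarrow> 'a dual \<times> ('a dual \<Rightarrow>\<^sub>L real) \<Rightarrow> ereal" where
  "phi_conj A = (\<lambda>(ys, yss). SUP p\<in>UNIV.
      ereal (pair (fst p) ys + blinfun_apply yss (snd p)) - phi_fun A p)"

definition P_fun :: "('a::real_normed_vector \<times> 'a dual) set \<Rightarrow> 'a \<times> 'a dual \<Rightarrow> ereal" where
  "P_fun A = (\<lambda>(x, xs). SUP q\<in>UNIV.
      ereal (pair x (fst q) + blinfun_apply (snd q) xs) - phi_conj A q)"

definition f_fun :: "('a::real_normed_vector \<times> 'a dual) set \<Rightarrow> 'a \<Rightarrow> 'a \<Rightarrow> ereal" where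
  "f_fun A w x = (INF as\<in>UNIV. P_fun A (x, as) - ereal (pair w as))"

definition g_fun :: "('a::real_normed_vector \<times> 'a dual) set \<Rightarrow> 'a dual \<Rightarrow> 'a dual \<Rightarrow> ereal" where
  "g_fun A vs xs = (INF a\<in>UNIV. P_fun A (a, xs) - ereal (pair a vs))"

definition f_conj :: "('a::real_normed_vector \<times> 'a dual) set \<Rightarrow> 'a \<Rightarrow> 'a dual \<Rightarrow> ereal" where
  "f_conj A w xs = (SUP y\<in>UNIV. ereal (pair y xs) - f_fun A w y)"

definition g_conj :: "('a::real_normed_vector \<times> 'a dual) set \<Rightarrow> 'a dual \<Rightarrow> 'a \<Rightarrow> ereal" where
  "g_conj A vs x = (SUP ys\<in>UNIV. ereal (pair x ys) - g_fun A vs ys)"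

end

theory Submission
  imports Defs
begin

definition ev :: "'a::real_normed_vector \<Rightarrow> ('a dual \<Rightarrow>\<^sub>L real)" where
  "ev a = Blinfun (\<lambda>ys::'a dual. blinfun_apply ys a)"

lemma ev_apply[simp]: "blinfun_apply (ev a) ys = blinfun_apply ys a"
  unfolding ev_def by (subst bounded_linear_Blinfun_apply) (auto intro: blinfun.bounded_linear_left)

lemma phi_conj_ev: "phi_conj A (ys, ev a) = fitzpatrick A (a, ys)"
proof (rule antisym)
  show "phi_conj A (ys, ev a) \<le> fitzpatrick A (a, ys)"
    unfolding phi_conj_def fitzpatrick_def
  proof (clarsimp intro!: SUP_least)
    fix x xs
    show "ereal (pair x ys + blinfun_apply xs a) - phi_fun A (x, xs)
       \<le> (SUP (y, ys')\<in>A. ereal (pair y ys + pair a ys' - pair y ys'))"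
    proof (cases "(x, xs) \<in> A")
      case True
      then have "ereal (pair x ys + pair a xs - pair x xs) \<le> (SUP (y, ys')\<in>A. ereal (pair y ys + pair a ys' - pair y ys'))"
        by (rule SUP_upper2) auto
      with True show ?thesis by (simp add: phi_fun_def pair_def)
    next
      case False
      then show ?thesis by (simp add: phi_fun_def)
    qed
  qed
next
  show "fitzpatrick A (a, ys) \<le> phi_conj A (ys, ev a)"
    unfolding phi_conj_def fitzpatrick_def
  proof (clarsimp intro!: SUP_least)
    fix y ys' assume "(y, ys') \<in> A"
    then have "ereal (pair y ys + pair a ys' - pair y ys') = ereal (pair (fst (y,ys')) ys + blinfun_apply (ev a) (snd (y,ys'))) - phi_fun A (y,ys')"
      by (simp add: phi_fun_def pair_def)
    also have "\<dots> \<le> (SUP p. ereal (pair (fst p) ys + blinfun_apply (ev a) (snd p)) - phi_fun A p)"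
      by (rule SUP_upper) simp
    finally show "ereal (pair y ys + pair a ys' - pair y ys') \<le> (SUP p. ereal (pair (fst p) ys + blinfun_apply (snd p) a) - phi_fun A p)" by simp
  qed
qed

lemma P_ge: "ereal (pair x ys + pair a xs) - fitzpatrick A (a, ys) \<le> P_fun A (x, xs)"
proof -
  have "ereal (pair x ys + pair a xs) - fitzpatrick A (a, ys)
     = ereal (pair x (fst (ys, ev a)) + blinfun_apply (snd (ys, ev a)) xs) - phi_conj A (ys, ev a)"
    by (simp add: phi_conj_ev pair_def)
  also have "\<dots> \<le> P_fun A (x, xs)" unfolding P_fun_def
    by (simp only: case_prod_conv) (rule SUP_upper, simp)
  finally show ?thesis .
qed

lemma halfspace_props:
  fixes L :: "'b::real_normed_vector \<Rightarrow> real" and c :: ereal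
  assumes L: "bounded_linear L"
  shows "convex {(p, r::real). ereal (L p) - c \<le> ereal r} \<and> closed {(p, r::real). ereal (L p) - c \<le> ereal r}"
proof (cases c)
  case (real d)
  have eq: "{(p, r::real). ereal (L p) - c \<le> ereal r} = {z. L (fst z) - d \<le> snd z}"
    using real by auto
  have cv: "convex {z. L (fst z) - d \<le> snd z}"
    unfolding convex_def
  proof (clarsimp)
    fix a b :: 'b and ra rb u v :: real
    assume h: "L a - d \<le> ra" "L b - d \<le> rb" "0 \<le> u" "0 \<le> v" "u + v = 1"
    have e1: "L (u *\<^sub>R a + v *\<^sub>R b) = u * L a + v * L b"
      using L by (simp add: linear_add linear_scale bounded_linear.linear)
    have e2: "u * (L a - d) \<le> u * ra" "v * (L b - d) \<le> v * rb"
      using h by (auto intro: mult_left_mono)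
    show "L (u *\<^sub>R a + v *\<^sub>R b) - d \<le> u * ra + v * rb"
    proof -
      have "u * d + v * d = d" using h(5) by (metis distrib_right mult_1)
      then show ?thesis using e1 e2 by (simp add: algebra_simps)
    qed
  qed
  have cl: "closed {z. L (fst z) - d \<le> snd z}"
    by (rule closed_Collect_le) (auto intro!: continuous_intros bounded_linear.continuous_on[OF L])
  show ?thesis using eq cv cl by simp
next
  case PInf
  then have "{(p, r::real). ereal (L p) - c \<le> ereal r} = UNIV" by auto
  then show ?thesis by simp
next
  case MInf
  then have "{(p, r::real). ereal (L p) - c \<le> ereal r} = {}" by auto
  then show ?thesis by simp
qed

lemma P_convex_lsc: "convex_fun (P_fun A) \<and> lsc_fun (P_fun A)"
proof -
  define S where "S q = {(p, r::real). ereal (pair (fst p) (fst q) + blinfun_apply (snd q) (snd p)) - phi_conj A q \<le> ereal r}" for q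
  have epi: "{(p, r::real). P_fun A p \<le> ereal r} = (\<Inter>q. S q)"
    unfolding S_def P_fun_def by (auto simp: split_beta SUP_le_iff)
  have bl: "bounded_linear (\<lambda>p::'a \<times> 'a dual. pair (fst p) (fst q) + blinfun_apply (snd q) (snd p))" for q
    unfolding pair_def
    by (auto intro!: bounded_linear_add bounded_linear_compose[OF blinfun.bounded_linear_right] 
          bounded_linear_compose[OF blinfun.bounded_linear_right] bounded_linear_fst bounded_linear_snd)
  have "convex (S q) \<and> closed (S q)" for q
    unfolding S_def by (rule halfspace_props[OF bl])
  then have "convex (\<Inter>q. S q)" "closed (\<Inter>q. S q)"
    by (auto intro!: convex_Inter closed_Inter)
  then show ?thesis unfolding convex_fun_def lsc_fun_def epi by simp
qed

lemma P_le_graph: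
  assumes "(x, xs) \<in> A"
  shows "P_fun A (x, xs) \<le> ereal (pair x xs)"
  unfolding P_fun_def case_prod_conv
proof (rule SUP_least)
  fix q :: "'a dual \<times> ('a dual \<Rightarrow>\<^sub>L real)"
  define c where "c = pair x (fst q) + blinfun_apply (snd q) xs"
  have "ereal c - ereal (pair x xs) = ereal (pair (fst (x,xs)) (fst q) + blinfun_apply (snd q) (snd (x,xs))) - phi_fun A (x,xs)"
    using assms by (simp add: c_def phi_fun_def)
  also have "\<dots> \<le> phi_conj A q"
    unfolding phi_conj_def by (simp only: split_beta) (rule SUP_upper, simp)
  finally have "ereal c - ereal (pair x xs) \<le> phi_conj A q" .
  then have "ereal c - phi_conj A q \<le> ereal c - (ereal c - ereal (pair x xs))"
    by (rule ereal_minus_mono[OF order_refl])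
  also have "\<dots> = ereal (pair x xs)" by simp
  finally show "ereal (pair x (fst q) + blinfun_apply (snd q) xs) - phi_conj A q \<le> ereal (pair x xs)"
    by (simp add: c_def)
qed

lemma ereal_minus_minus: "ereal c - (z - ereal d) = ereal (c + d) - z"
  by (cases z) auto

theorem corollary3p5:
  fixes A :: "('a::banach \<times> ('a \<Rightarrow>\<^sub>L real)) set"
  assumes "maximal_monotone A"
    and "representative_funs A = {fitzpatrick A}"
    and "w \<in> dom_op A" and "vs \<in> im_op A"
  shows "(\<forall>x. fitzpatrick A (x, vs) = g_conj A vs x \<and> g_conj A vs x = P_fun A (x, vs))
       \<and> (\<forall>xs. fitzpatrick A (w, xs) = f_conj A w xs \<and> f_conj A w xs = P_fun A (w, xs))"
proof -
  have FR: "fitzpatrick A \<in> representative_funs A" using assms(2) by simp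
  then have Fge: "\<And>x xs. ereal (pair x xs) \<le> fitzpatrick A (x, xs)"
    and Feq: "\<And>x xs. (x, xs) \<in> A \<Longrightarrow> fitzpatrick A (x, xs) = ereal (pair x xs)"
    by (auto simp: representative_funs_def)
  have PgeF: "fitzpatrick A (x, xs) \<le> P_fun A (x, xs)" for x xs
    unfolding fitzpatrick_def case_prod_conv
  proof (rule SUP_least)
    fix p assume "p \<in> A"
    obtain y ys where p: "p = (y, ys)" by (cases p)
    have "ereal (pair y xs + pair x ys - pair y ys) = ereal (pair x ys + pair y xs) - fitzpatrick A (y, ys)"
      using Feq[of y ys] \<open>p \<in> A\<close> p by simp
    also have "\<dots> \<le> P_fun A (x, xs)" by (rule P_ge)
    finally show "(\<lambda>(y, ys). ereal (pair y xs + pair x ys - pair y ys)) p \<le> P_fun A (x, xs)"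
      using p by simp
  qed
  obtain w0 ws0 where w0: "(w0, ws0) \<in> A" using assms(3) by (auto simp: dom_op_def)
  have Pge: "ereal (pair x xs) \<le> P_fun A (x, xs)" for x xs
    using Fge[of x xs] PgeF[of x xs] by simp
  have Peq: "(x, xs) \<in> A \<Longrightarrow> P_fun A (x, xs) = ereal (pair x xs)" for x xs
    using Pge[of x xs] P_le_graph[of x xs A] by simp
  have "P_fun A \<in> representative_funs A"
    unfolding representative_funs_def proper_fun_def
  proof (intro CollectI conjI allI)
    fix p :: "'a \<times> 'a dual"
    obtain x xs where p: "p = (x, xs)" by (cases p)
    show "P_fun A p \<noteq> -\<infinity>" using Pge[of x xs] p by auto
  next
    show "\<exists>p. P_fun A p \<noteq> \<infinity>" using Peq[OF w0] by (intro exI[of _ "(w0, ws0)"]) simp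
  next
    show "convex_fun (P_fun A)" "lsc_fun (P_fun A)" using P_convex_lsc by auto
  next
    fix x xs show "ereal (pair x xs) \<le> P_fun A (x, xs)" by (rule Pge)
  next
    show "\<forall>(x, xs)\<in>A. P_fun A (x, xs) = ereal (pair x xs)" using Peq by auto
  qed
  then have PF: "P_fun A = fitzpatrick A" using assms(2) by blast
  have part1: "g_conj A vs x = fitzpatrick A (x, vs)" for x
  proof (rule antisym)
    show "g_conj A vs x \<le> fitzpatrick A (x, vs)"
      unfolding g_conj_def
    proof (rule SUP_least)
      fix ys :: "'a dual"
      have "ereal (pair x ys) - g_fun A vs ys = (SUP a\<in>UNIV. ereal (pair x ys) - (P_fun A (a, ys) - ereal (pair a vs)))"
        unfolding g_fun_def by (rule SUP_ereal_minus_right[symmetric]) auto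
      also have "\<dots> \<le> fitzpatrick A (x, vs)"
      proof (rule SUP_least)
        fix a
        have "ereal (pair x ys) - (P_fun A (a, ys) - ereal (pair a vs)) = ereal (pair x ys + pair a vs) - fitzpatrick A (a, ys)"
          by (simp add: PF ereal_minus_minus)
        also have "\<dots> \<le> P_fun A (x, vs)" by (rule P_ge)
        finally show "ereal (pair x ys) - (P_fun A (a, ys) - ereal (pair a vs)) \<le> fitzpatrick A (x, vs)"
          by (simp add: PF)
      qed
      finally show "ereal (pair x ys) - g_fun A vs ys \<le> fitzpatrick A (x, vs)" .
    qed
  next
    show "fitzpatrick A (x, vs) \<le> g_conj A vs x"
      unfolding fitzpatrick_def case_prod_conv
    proof (rule SUP_least)
      fix p assume "p \<in> A"
      obtain z zs where p: "p = (z, zs)" by (cases p)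
      have "g_fun A vs zs \<le> P_fun A (z, zs) - ereal (pair z vs)"
        unfolding g_fun_def by (rule INF_lower) simp
      also have "\<dots> = ereal (pair z zs - pair z vs)"
        using Peq[of z zs] \<open>p \<in> A\<close> p by simp
      finally have "ereal (pair x zs) - ereal (pair z zs - pair z vs) \<le> ereal (pair x zs) - g_fun A vs zs"
        by (rule ereal_minus_mono[OF order_refl])
      also have "\<dots> \<le> g_conj A vs x"
        unfolding g_conj_def by (rule SUP_upper) simp
      finally show "(\<lambda>(y, ys). ereal (pair y vs + pair x ys - pair y ys)) p \<le> g_conj A vs x"
        using p by (simp add: algebra_simps)
    qed
  qed
  have part2: "f_conj A w xs = fitzpatrick A (w, xs)" for xs
  proof (rule antisym)
    show "f_conj A w xs \<le> fitzpatrick A (w, xs)"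
      unfolding f_conj_def
    proof (rule SUP_least)
      fix y :: 'a
      have "ereal (pair y xs) - f_fun A w y = (SUP as\<in>UNIV. ereal (pair y xs) - (P_fun A (y, as) - ereal (pair w as)))"
        unfolding f_fun_def by (rule SUP_ereal_minus_right[symmetric]) auto
      also have "\<dots> \<le> fitzpatrick A (w, xs)"
      proof (rule SUP_least)
        fix as
        have "ereal (pair y xs) - (P_fun A (y, as) - ereal (pair w as)) = ereal (pair w as + pair y xs) - fitzpatrick A (y, as)"
          by (simp add: PF ereal_minus_minus add.commute)
        also have "\<dots> \<le> P_fun A (w, xs)" by (rule P_ge)
        finally show "ereal (pair y xs) - (P_fun A (y, as) - ereal (pair w as)) \<le> fitzpatrick A (w, xs)"
          by (simp add: PF)
      qed
      finally show "ereal (pair y xs) - f_fun A w y \<le> fitzpatrick A (w, xs)" .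
    qed
  next
    show "fitzpatrick A (w, xs) \<le> f_conj A w xs"
      unfolding fitzpatrick_def case_prod_conv
    proof (rule SUP_least)
      fix p assume "p \<in> A"
      obtain y ys where p: "p = (y, ys)" by (cases p)
      have "f_fun A w y \<le> P_fun A (y, ys) - ereal (pair w ys)"
        unfolding f_fun_def by (rule INF_lower) simp
      also have "\<dots> = ereal (pair y ys - pair w ys)"
        using Peq[of y ys] \<open>p \<in> A\<close> p by simp
      finally have "ereal (pair y xs) - ereal (pair y ys - pair w ys) \<le> ereal (pair y xs) - f_fun A w y"
        by (rule ereal_minus_mono[OF order_refl])
      also have "\<dots> \<le> f_conj A w xs"
        unfolding f_conj_def by (rule SUP_upper) simp
      finally show "(\<lambda>(y, ys). ereal (pair y xs + pair w ys - pair y ys)) p \<le> f_conj A w xs"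
        using p by (simp add: algebra_simps)
    qed
  qed
  show ?thesis using part1 part2 PF by simp
qed

end
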